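(* Let $\Gamma=(N,A,u)$ be a finite normal form game and let $G\le S_\Gamma$ be player transitive. There exists a matching $M$ of $A_1,\dots,A_n$ such that $M_{\overrightarrow{G}}=G$ if and only if $G$ is strategy trivial.
   Context: $S_\Gamma$ is the group of game bijections $g=(\pi;(\tau_i)_{i\in N})$ from $\Gamma$ to itself ($\pi\in S_N$, bijections $\tau_i:A_i\to A_{\pi(i)}$), with composition $(\eta;(\phi_j))\circ(\pi;(\tau_i))=(\eta\circ\pi;(\phi_{\pi(i)}\circ\tau_i)_{i\in N})$; write $g(i)=\pi(i)$, $g(s_i)=\tau_i(s_i)$. $\overrightarrow{G}\le S_N$ is the set of player permutations of elements of $G$. $G$ is player transitive if $\overrightarrow{G}$ acts transitively on $N$. $G$ is strategy trivial if for each $i\in N$, $g(s_i)=s_i$ for all $g\in G$ with $g(i)=i$ and all $s_i\in A_i$. A matching of $A_1,\dots,A_n$ is $M\subseteq\times_{i\in N}A_i$ such that for each $i$ and $a_i\in A_i$ there is exactly one $s\in M$ with $s_i=a_i$; $M_{ij}:A_i\to A_j$ sends $a_i$ to the unique $a_j$ with some $s\in M$ having $s_i=a_i,s_j=a_j$; $M_\pi=(\pi;(M_{i\pi(i)})_{i\in N})$ and $M_H=\{M_\pi:\pi\in H\}$ for $H\subseteq S_N$. *)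

theory Defs
  imports Complex_Main "HOL-Algebra.Group"
begin

text \<open>Players form a finite type 'p (N = UNIV); A i :: 's set is the strategy set of player i.
A game bijection g = (pi, tau) is a player permutation pi together with bijections
tau i : A i -> A (pi i); tau i is normalised to be undefined outside A i so that
equality of game bijections is equality of the underlying data.\<close>

type_synonym ('p, 's) game_bij = "('p \<Rightarrow> 'p) \<times> ('p \<Rightarrow> 's \<Rightarrow> 's)"

definition game_bijections :: "('p \<Rightarrow> 's set) \<Rightarrow> ('p, 's) game_bij set" where
  "game_bijections A = {(\<pi>, \<tau>). bij \<pi> \<and> (\<forall>i. bij_betw (\<tau> i) (A i) (A (\<pi> i)))
       \<and> (\<forall>i s. s \<notin> A i \<longrightarrow> \<tau> i s = undefined)}"

definition gb_comp :: "('p \<Rightarrow> 's set) \<Rightarrow> ('p, 's) game_bij \<Rightarrow> ('p, 's) game_bij \<Rightarrow> ('p, 's) game_bij" where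
  "gb_comp A h g = (fst h \<circ> fst g,
      \<lambda>i s. if s \<in> A i then snd h (fst g i) (snd g i s) else undefined)"

definition gb_id :: "('p \<Rightarrow> 's set) \<Rightarrow> ('p, 's) game_bij" where
  "gb_id A = (id, \<lambda>i s. if s \<in> A i then s else undefined)"

definition S_Gamma :: "('p \<Rightarrow> 's set) \<Rightarrow> ('p, 's) game_bij monoid" where
  "S_Gamma A = \<lparr>carrier = game_bijections A, mult = gb_comp A, one = gb_id A\<rparr>"

definition player_perms :: "('p, 's) game_bij set \<Rightarrow> ('p \<Rightarrow> 'p) set" where
  "player_perms G = fst ` G"

definition player_transitive :: "('p, 's) game_bij set \<Rightarrow> bool" where
  "player_transitive G \<longleftrightarrow> (\<forall>i j. \<exists>\<pi>\<in>player_perms G. \<pi> i = j)"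

definition strategy_trivial :: "('p \<Rightarrow> 's set) \<Rightarrow> ('p, 's) game_bij set \<Rightarrow> bool" where
  "strategy_trivial A G \<longleftrightarrow> (\<forall>i. \<forall>g\<in>G. fst g i = i \<longrightarrow> (\<forall>s\<in>A i. snd g i s = s))"

definition matching :: "('p \<Rightarrow> 's set) \<Rightarrow> ('p \<Rightarrow> 's) set \<Rightarrow> bool" where
  "matching A M \<longleftrightarrow> M \<subseteq> {s. \<forall>i. s i \<in> A i}
      \<and> (\<forall>i. \<forall>a\<in>A i. \<exists>!s. s \<in> M \<and> s i = a)"

definition match_map :: "('p \<Rightarrow> 's set) \<Rightarrow> ('p \<Rightarrow> 's) set \<Rightarrow> 'p \<Rightarrow> 'p \<Rightarrow> 's \<Rightarrow> 's" where
  "match_map A M i j = (\<lambda>a. if a \<in> A i then (THE b. \<exists>s\<in>M. s i = a \<and> s j = b) else undefined)"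

definition match_bij :: "('p \<Rightarrow> 's set) \<Rightarrow> ('p \<Rightarrow> 's) set \<Rightarrow> ('p \<Rightarrow> 'p) \<Rightarrow> ('p, 's) game_bij" where
  "match_bij A M \<pi> = (\<pi>, \<lambda>i. match_map A M i (\<pi> i))"

definition match_set :: "('p \<Rightarrow> 's set) \<Rightarrow> ('p \<Rightarrow> 's) set \<Rightarrow> ('p \<Rightarrow> 'p) set \<Rightarrow> ('p, 's) game_bij set" where
  "match_set A M H = match_bij A M ` H"

end

theory Submission
  imports Defs
begin

lemma gb_inv_exists:
  assumes sg: "subgroup G (S_Gamma A)" and x: "x \<in> G"
  shows "\<exists>y\<in>G. gb_comp A y x = gb_id A \<and> gb_comp A x y = gb_id A"
proof -
  obtain \<pi> \<tau> where xe: "x = (\<pi>, \<tau>)" by (cases x)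
  have xc: "x \<in> game_bijections A" using sg x subgroup.subset by (fastforce simp: S_Gamma_def)
  hence bp: "bij \<pi>" and bt: "\<And>i. bij_betw (\<tau> i) (A i) (A (\<pi> i))"
    and ut: "\<And>i s. s \<notin> A i \<Longrightarrow> \<tau> i s = undefined"
    by (auto simp: game_bijections_def xe)
  define \<pi>' where "\<pi>' = inv_into UNIV \<pi>"
  define \<tau>' where "\<tau>' = (\<lambda>j b. if b \<in> A j then inv_into (A (\<pi>' j)) (\<tau> (\<pi>' j)) b else undefined)"
  define y0 where "y0 = (\<pi>', \<tau>')"
  have pp1: "\<And>i. \<pi>' (\<pi> i) = i" and pp2: "\<And>j. \<pi> (\<pi>' j) = j"
    using bp by (auto simp: \<pi>'_def bij_def inv_f_f surj_f_inv_f)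
  have y0c: "y0 \<in> game_bijections A"
    unfolding game_bijections_def y0_def
  proof (safe)
    show "bij \<pi>'" using bp by (simp add: \<pi>'_def bij_imp_bij_inv)
  next
    fix j
    have "bij_betw (inv_into (A (\<pi>' j)) (\<tau> (\<pi>' j))) (A (\<pi> (\<pi>' j))) (A (\<pi>' j))"
      using bt bij_betw_inv_into by blast
    then show "bij_betw (\<tau>' j) (A j) (A (\<pi>' j))"
      unfolding \<tau>'_def pp2 by (rule bij_betw_cong[THEN iffD1, rotated]) auto
  next
    fix i s assume "s \<notin> A i" thus "\<tau>' i s = undefined" by (simp add: \<tau>'_def)
  qed
  have tin: "\<And>i s. s \<in> A i \<Longrightarrow> \<tau> i s \<in> A (\<pi> i)" using bt bij_betwE by blast
  have til: "\<And>i s. s \<in> A i \<Longrightarrow> inv_into (A i) (\<tau> i) (\<tau> i s) = s"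
    using bt bij_betw_inv_into_left by fast
  have tir: "\<And>j b. b \<in> A j \<Longrightarrow> \<tau> (\<pi>' j) (inv_into (A (\<pi>' j)) (\<tau> (\<pi>' j)) b) = b"
    using bt bij_betw_inv_into_right pp2 by metis
  have e1: "gb_comp A y0 x = gb_id A"
  proof -
    have h: "\<And>i s. s \<in> A i \<Longrightarrow> \<tau>' (\<pi> i) (\<tau> i s) = s"
      by (simp add: \<tau>'_def tin pp1 til)
    show ?thesis using pp1 by (simp add: h gb_comp_def gb_id_def y0_def xe fun_eq_iff)
  qed
  have e2: "gb_comp A x y0 = gb_id A"
  proof -
    have h: "\<And>i s. s \<in> A i \<Longrightarrow> \<tau> (\<pi>' i) (\<tau>' i s) = s"
      by (simp add: \<tau>'_def tir)
    show ?thesis using pp2 by (simp add: h gb_comp_def gb_id_def y0_def xe fun_eq_iff)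
  qed
  have uniq: "y = y0" if yc: "y \<in> game_bijections A" and ye: "gb_comp A y x = gb_id A" for y
  proof -
    obtain \<rho> \<sigma> where yy: "y = (\<rho>, \<sigma>)" by (cases y)
    have us: "\<And>i s. s \<notin> A i \<Longrightarrow> \<sigma> i s = undefined" using yc by (auto simp: game_bijections_def yy)
    have c1: "fst (gb_comp A y x) = \<rho> \<circ> \<pi>" unfolding gb_comp_def yy xe prod.sel by (rule refl)
    have c2: "\<And>i s. snd (gb_comp A y x) i s = (if s \<in> A i then \<sigma> (\<pi> i) (\<tau> i s) else undefined)"
      unfolding gb_comp_def yy xe prod.sel by (rule refl)
    have f: "\<rho> \<circ> \<pi> = id"
    proof -
      have "\<rho> \<circ> \<pi> = fst (gb_comp A y x)" by (simp only: c1)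
      also have "\<dots> = fst (gb_id A)" by (simp only: ye)
      also have "\<dots> = id" by (simp add: gb_id_def)
      finally show ?thesis .
    qed
    have s: "\<sigma> (\<pi> i) (\<tau> i s) = s" if si: "s \<in> A i" for i s
    proof -
      have "\<sigma> (\<pi> i) (\<tau> i s) = snd (gb_comp A y x) i s" using si by (simp only: c2 if_True)
      also have "\<dots> = snd (gb_id A) i s" by (simp only: ye)
      also have "\<dots> = s" using si by (simp add: gb_id_def)
      finally show ?thesis .
    qed
    have fp: "\<And>i. \<rho> (\<pi> i) = i" using f by (metis comp_apply id_apply)
    have r: "\<rho> = \<pi>'"
    proof
      fix j have "\<rho> j = \<rho> (\<pi> (\<pi>' j))" by (simp only: pp2)
      also have "\<dots> = \<pi>' j" by (rule fp)
      finally show "\<rho> j = \<pi>' j" .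
    qed
    have "\<sigma> = \<tau>'"
    proof (intro ext)
      fix j b show "\<sigma> j b = \<tau>' j b"
      proof (cases "b \<in> A j")
        case True
        then have b2: "b \<in> A (\<pi> (\<pi>' j))" by (simp add: pp2)
        then obtain a where a: "a \<in> A (\<pi>' j)" "b = \<tau> (\<pi>' j) a"
          using bt[of "\<pi>' j"] by (metis bij_betw_imp_surj_on imageE)
        have "\<sigma> (\<pi> (\<pi>' j)) (\<tau> (\<pi>' j) a) = a" by (rule s[OF a(1)])
        then have "\<sigma> j b = a" using a(2) by (simp only: pp2)
        moreover have "\<tau>' j b = a" using True a bt[of "\<pi>' j"] by (simp add: \<tau>'_def bij_betw_inv_into_left)
        ultimately show ?thesis by simp
      qed (simp add: us \<tau>'_def)
    qed
    then show ?thesis using r by (simp add: yy y0_def)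
  qed
  have "inv\<^bsub>S_Gamma A\<^esub> x = y0"
    unfolding m_inv_def
  proof (rule the_equality)
    show "y0 \<in> carrier (S_Gamma A) \<and> x \<otimes>\<^bsub>S_Gamma A\<^esub> y0 = \<one>\<^bsub>S_Gamma A\<^esub> \<and> y0 \<otimes>\<^bsub>S_Gamma A\<^esub> x = \<one>\<^bsub>S_Gamma A\<^esub>"
      using y0c e1 e2 by (simp add: S_Gamma_def)
    fix y assume "y \<in> carrier (S_Gamma A) \<and> x \<otimes>\<^bsub>S_Gamma A\<^esub> y = \<one>\<^bsub>S_Gamma A\<^esub> \<and> y \<otimes>\<^bsub>S_Gamma A\<^esub> x = \<one>\<^bsub>S_Gamma A\<^esub>"
    then have "y \<in> game_bijections A" "gb_comp A y x = gb_id A" by (simp_all add: S_Gamma_def)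
    then show "y = y0" by (rule uniq)
  qed
  moreover have "inv\<^bsub>S_Gamma A\<^esub> x \<in> G" by (rule subgroup.m_inv_closed[OF sg x])
  ultimately have "y0 \<in> G" by simp
  then show ?thesis using e1 e2 by blast
qed

lemma gb_in_carrier:
  assumes "subgroup G (S_Gamma A)" "g \<in> G"
  shows "g \<in> game_bijections A"
  using assms subgroup.subset by (fastforce simp: S_Gamma_def)

lemma gb_comp_closed:
  assumes "subgroup G (S_Gamma A)" "g \<in> G" "h \<in> G"
  shows "gb_comp A g h \<in> G"
proof -
  have "g \<otimes>\<^bsub>S_Gamma A\<^esub> h \<in> G" by (rule subgroup.m_closed[OF assms])
  then show ?thesis by (simp add: S_Gamma_def)
qed

lemma gb_id_in:
  assumes "subgroup G (S_Gamma A)"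
  shows "gb_id A \<in> G"
proof -
  have "\<one>\<^bsub>S_Gamma A\<^esub> \<in> G" by (rule subgroup.one_closed[OF assms])
  then show ?thesis by (simp add: S_Gamma_def)
qed

lemma gb_bij:
  assumes "g \<in> game_bijections A"
  shows "bij_betw (snd g i) (A i) (A (fst g i))"
  using assms by (auto simp: game_bijections_def)

lemma gb_undef:
  assumes "g \<in> game_bijections A" "s \<notin> A i"
  shows "snd g i s = undefined"
  using assms by (auto simp: game_bijections_def)

lemma gb_comp_fst: "fst (gb_comp A h g) i = fst h (fst g i)"
  by (simp add: gb_comp_def)

lemma gb_comp_snd: "s \<in> A i \<Longrightarrow> snd (gb_comp A h g) i s = snd h (fst g i) (snd g i s)"
  by (simp add: gb_comp_def)

lemma gb_id_fst: "fst (gb_id A) i = i"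
  by (simp add: gb_id_def)

lemma gb_id_snd: "s \<in> A i \<Longrightarrow> snd (gb_id A) i s = s"
  by (simp add: gb_id_def)

theorem theorem4p23:
  fixes A :: "'p::finite \<Rightarrow> 's set"
    and u :: "'p \<Rightarrow> ('p \<Rightarrow> 's) \<Rightarrow> real"
    and G :: "('p, 's) game_bij set"
  assumes "\<And>i. finite (A i)" and "\<And>i. A i \<noteq> {}"
    and "subgroup G (S_Gamma A)"
    and "player_transitive G"
  shows "(\<exists>M. matching A M \<and> match_set A M (player_perms G) = G) \<longleftrightarrow> strategy_trivial A G"
proof
  assume "\<exists>M. matching A M \<and> match_set A M (player_perms G) = G"
  then obtain M where mM: "matching A M" and eq: "match_set A M (player_perms G) = G" by blast
  show "strategy_trivial A G"
    unfolding strategy_trivial_def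
  proof (intro allI ballI impI)
    fix i g s assume g: "g \<in> G" and gi: "fst g i = i" and s: "s \<in> A i"
    from g eq obtain \<pi> where ge: "g = match_bij A M \<pi>"
      unfolding match_set_def by blast
    have pi: "\<pi> i = i" using gi ge by (simp add: match_bij_def)
    obtain s' where s': "s' \<in> M" "s' i = s" using mM s unfolding matching_def by blast
    have "(THE b. \<exists>t\<in>M. t i = s \<and> t i = b) = s"
      by (rule the_equality) (use s' in auto)
    then show "snd g i s = s" using ge pi s by (simp add: match_bij_def match_map_def)
  qed
next
  assume st: "strategy_trivial A G"
  note sg = assms(3)
  define i0 :: 'p where "i0 = undefined"
  have Gc: "\<And>g. g \<in> G \<Longrightarrow> g \<in> game_bijections A" by (rule gb_in_carrier[OF sg])
  have Gbij: "\<And>g i. g \<in> G \<Longrightarrow> bij_betw (snd g i) (A i) (A (fst g i))" by (rule gb_bij[OF Gc])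
  have Tex: "\<And>j. \<exists>g\<in>G. fst g i0 = j"
    using assms(4) unfolding player_transitive_def player_perms_def by blast
  have WD: "snd g i0 a = snd h i0 a"
    if g: "g \<in> G" and h: "h \<in> G" and e: "fst g i0 = fst h i0" and a: "a \<in> A i0" for g h a
  proof -
    obtain h' where h': "h' \<in> G" "gb_comp A h' h = gb_id A" "gb_comp A h h' = gb_id A"
      using gb_inv_exists[OF sg h] by blast
    define j where "j = fst g i0"
    define b where "b = snd g i0 a"
    have b: "b \<in> A j" unfolding b_def j_def using Gbij[OF g, of i0] a bij_betwE by blast
    have hj: "fst h' j = i0"
    proof -
      have "fst h' j = fst (gb_comp A h' h) i0" by (simp add: gb_comp_fst j_def e)
      also have "\<dots> = i0" by (simp add: h'(2) gb_id_fst)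
      finally show ?thesis .
    qed
    have k: "gb_comp A h' g \<in> G" by (rule gb_comp_closed[OF sg h'(1) g])
    have "fst (gb_comp A h' g) i0 = i0" using hj by (simp add: gb_comp_fst j_def)
    then have "snd (gb_comp A h' g) i0 a = a" using st k a unfolding strategy_trivial_def by blast
    then have hb: "snd h' j b = a" by (simp add: gb_comp_snd[of a A i0] a j_def b_def)
    have "snd h i0 a = snd h (fst h' j) (snd h' j b)" by (simp add: hb hj)
    also have "\<dots> = snd (gb_comp A h h') j b" by (simp add: gb_comp_snd[of b A j] b)
    also have "\<dots> = b" by (simp add: h'(3) gb_id_snd[of b A j] b)
    finally show ?thesis by (simp add: b_def)
  qed
  define T where "T j = snd (SOME g. g \<in> G \<and> fst g i0 = j) i0" for j
  have Tg: "T (fst g i0) a = snd g i0 a" if g: "g \<in> G" and a: "a \<in> A i0" for g a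
  proof -
    let ?g = "SOME g'. g' \<in> G \<and> fst g' i0 = fst g i0"
    have gs: "?g \<in> G \<and> fst ?g i0 = fst g i0" by (rule someI[of _ g]) (simp add: g)
    have "T (fst g i0) a = snd ?g i0 a" by (simp add: T_def)
    also have "\<dots> = snd g i0 a" using gs g a by (intro WD) simp_all
    finally show ?thesis .
  qed
  have Tbij: "bij_betw (T j) (A i0) (A j)" for j
  proof -
    obtain g where g: "g \<in> G" "fst g i0 = j" using Tex by blast
    have b1: "bij_betw (snd g i0) (A i0) (A j)" using Gbij[OF g(1), of i0] g(2) by simp
    have "\<And>a. a \<in> A i0 \<Longrightarrow> T j a = snd g i0 a" using Tg[OF g(1)] g(2) by simp
    then have "bij_betw (T j) (A i0) (A j) = bij_betw (snd g i0) (A i0) (A j)" by (rule bij_betw_cong)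
    then show ?thesis using b1 by simp
  qed
  have TA: "T j a \<in> A j" if "a \<in> A i0" for j a
    using bij_betwE[OF Tbij[of j]] that by simp
  have Tinj: "a = a'" if "a \<in> A i0" "a' \<in> A i0" "T j a = T j a'" for j a a'
    by (rule inj_onD[OF bij_betw_imp_inj_on[OF Tbij[of j]] that(3) that(1) that(2)])
  have Tsurj: "\<exists>a\<in>A i0. T j a = b" if "b \<in> A j" for j b
  proof -
    have "T j ` A i0 = A j" by (rule bij_betw_imp_surj_on[OF Tbij])
    then have "b \<in> T j ` A i0" using that by simp
    then show ?thesis by (auto simp del: ex_image_cong_iff)
  qed
  define prof where "prof a = (\<lambda>j. T j a)" for a
  define M where "M = prof ` A i0"
  have Muniq: "s = s'" if sM: "s \<in> M" "s' \<in> M" "s j = s' j" for s s' j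
  proof -
    have "s \<in> prof ` A i0" using sM(1) by (simp add: M_def)
    then obtain a where a: "s = prof a" "a \<in> A i0" by (rule imageE)
    have "s' \<in> prof ` A i0" using sM(2) by (simp add: M_def)
    then obtain a' where a': "s' = prof a'" "a' \<in> A i0" by (rule imageE)
    have "T j a = T j a'" using sM(3) a(1) a'(1) by (simp add: prof_def)
    then have "a = a'" by (rule Tinj[OF a(2) a'(2)])
    then show ?thesis using a(1) a'(1) by simp
  qed
  have mM: "matching A M"
    unfolding matching_def
  proof (intro conjI allI ballI)
    show "M \<subseteq> {s. \<forall>i. s i \<in> A i}" using TA by (auto simp: M_def prof_def)
    fix j b assume b: "b \<in> A j"
    obtain a where a: "a \<in> A i0" "T j a = b" using Tsurj[OF b] by blast
    have pm: "prof a \<in> M" using a by (simp add: M_def)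
    show "\<exists>!s. s \<in> M \<and> s j = b"
    proof (rule ex1I)
      show "prof a \<in> M \<and> prof a j = b" using pm a by (simp add: prof_def)
      fix s assume "s \<in> M \<and> s j = b"
      then show "s = prof a" using Muniq[of s "prof a" j] pm a by (simp add: prof_def)
    qed
  qed
  have mb: "match_bij A M (fst g) = g" if g: "g \<in> G" for g
  proof -
    obtain \<pi> \<tau> where ge: "g = (\<pi>, \<tau>)" by (cases g)
    have "(\<lambda>i. match_map A M i (\<pi> i)) = \<tau>"
    proof (intro ext)
      fix i s show "match_map A M i (\<pi> i) s = \<tau> i s"
      proof (cases "s \<in> A i")
        case False
        then show ?thesis using gb_undef[OF Gc[OF g], of s i] ge by (simp add: match_map_def)
      next
        case True
        obtain a where a: "a \<in> A i0" "T i a = s" using Tsurj[OF True] by blast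
        obtain h where h: "h \<in> G" "fst h i0 = i" using Tex by blast
        have gh: "gb_comp A g h \<in> G" by (rule gb_comp_closed[OF sg g h(1)])
        have "T (\<pi> i) a = T (fst (gb_comp A g h) i0) a" using h ge by (simp add: gb_comp_fst)
        also have "\<dots> = snd (gb_comp A g h) i0 a" by (rule Tg[OF gh a(1)])
        also have "\<dots> = \<tau> i (snd h i0 a)" using h ge by (simp add: gb_comp_snd[of a A i0] a(1))
        also have "snd h i0 a = T i a" using Tg[OF h(1) a(1)] h(2) by simp
        finally have Tpi: "T (\<pi> i) a = \<tau> i s" using a(2) by simp
        have pm: "prof a \<in> M" using a by (simp add: M_def)
        have "(THE b. \<exists>t\<in>M. t i = s \<and> t (\<pi> i) = b) = \<tau> i s"
        proof (rule the_equality)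
          show "\<exists>t\<in>M. t i = s \<and> t (\<pi> i) = \<tau> i s" using pm a Tpi by (auto simp: prof_def)
          fix b assume "\<exists>t\<in>M. t i = s \<and> t (\<pi> i) = b"
          then obtain t where t: "t \<in> M" "t i = s" "t (\<pi> i) = b" by blast
          have "t = prof a" using Muniq[of t "prof a" i] t pm a by (simp add: prof_def)
          then show "b = \<tau> i s" using t Tpi by (simp add: prof_def)
        qed
        then show ?thesis using True by (simp add: match_map_def)
      qed
    qed
    then show ?thesis using ge by (simp add: match_bij_def)
  qed
  have "match_set A M (player_perms G) = (\<lambda>g. match_bij A M (fst g)) ` G"
    unfolding match_set_def player_perms_def by (simp add: image_image)
  also have "\<dots> = G" using mb by simp
  finally show "\<exists>M. matching A M \<and> match_set A M (player_perms G) = G" using mM by blast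
qed

end
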